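(* Let $n\ge4$, $r_1,r_2,r_3\in\mathbb{Z}_+$ with $r_1+r_2+r_3=n-1$, and let $-1<\alpha_1<1$, $0\le\alpha_2,\alpha_3<1$ with $\alpha_1+\alpha_2+\alpha_3=1$, $r_1+\alpha_1\ge r_2+\alpha_2$ and $r_1+\alpha_1\ge r_3+\alpha_3$. Then $$\mathfrak{L}_n(r_1,r_2,r_3,\alpha_1,\alpha_2,\alpha_3)\le \mathfrak{L}_n(r_1+r_3,r_2,0,\alpha_1,\alpha_2,\alpha_3)+2^{r_2+r_3+2}+2^{r_2}-r_3+\begin{cases}2^{r_3}, & r_2\ge1,\\ 2^{r_3+1}\ln n, & r_2=0.\end{cases}$$
   Context: Points of a triangle are identified with barycentric coordinates $\lambda=(\lambda_1,\lambda_2,\lambda_3)$, $\lambda_r\ge0$, $\sum\lambda_r=1$. For an integer $n\ge1$ let $I=\{i=(i_1,i_2,i_3)\in\mathbb{Z}_+^3: i_1+i_2+i_3=n\}$, and let $l_i(\lambda)=\prod_{s=1}^{3}\frac{1}{i_s!}\prod_{t=0}^{i_s-1}(n\lambda_s-t)$ (the Lagrange fundamental polynomials for the equally spaced nodes $i/n$, $i\in I$). The Lebesgue function is $\mathcal{L}_n(\lambda)=\sum_{i\in I}|l_i(\lambda)|$. For $r_s\in\mathbb{Z}_+$ with $r_1+r_2+r_3=n-1$ and reals $\alpha_s$ with $\alpha_1+\alpha_2+\alpha_3=1$, write $\mathfrak{L}_n(r_1,r_2,r_3,\alpha_1,\alpha_2,\alpha_3)=\mathcal{L}_n(\lambda)$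 where $\lambda_s=(r_s+\alpha_s)/n$, $s=1,2,3$. *)

theory Defs
  imports Complex_Main
begin

definition idx :: "nat \<Rightarrow> (nat \<times> nat \<times> nat) set" where
  "idx n = {(i1, i2, i3). i1 + i2 + i3 = n}"

definition lfac :: "nat \<Rightarrow> nat \<Rightarrow> real \<Rightarrow> real" where
  "lfac n k x = (1 / fact k) * (\<Prod>t<k. (real n * x - real t))"

text \<open>Lagrange fundamental polynomial l_i at barycentric point (x1,x2,x3).\<close>
definition lagr :: "nat \<Rightarrow> nat \<times> nat \<times> nat \<Rightarrow> real \<Rightarrow> real \<Rightarrow> real \<Rightarrow> real" where
  "lagr n i x1 x2 x3 = (case i of (i1, i2, i3) \<Rightarrow> lfac n i1 x1 * lfac n i2 x2 * lfac n i3 x3)"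

definition leb :: "nat \<Rightarrow> real \<Rightarrow> real \<Rightarrow> real \<Rightarrow> real" where
  "leb n x1 x2 x3 = (\<Sum>i\<in>idx n. \<bar>lagr n i x1 x2 x3\<bar>)"

definition frakL :: "nat \<Rightarrow> nat \<Rightarrow> nat \<Rightarrow> nat \<Rightarrow> real \<Rightarrow> real \<Rightarrow> real \<Rightarrow> real" where
  "frakL n r1 r2 r3 a1 a2 a3 =
     leb n ((real r1 + a1) / real n) ((real r2 + a2) / real n) ((real r3 + a3) / real n)"

end

theory Submission
  imports Defs "HOL-Analysis.Harmonic_Numbers"
begin

lemma gb_rec: "(y::real) gchoose (Suc k) = (y gchoose k) * (y - of_nat k) / of_nat (Suc k)"
  using gbinomial_mult_1[of y k] by (simp add: field_simps)

lemma gb_abs_rec: "\<bar>(y::real) gchoose (Suc k)\<bar> = \<bar>y gchoose k\<bar> * \<bar>y - of_nat k\<bar> / of_nat (Suc k)"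
  by (simp add: gb_rec abs_mult)

lemma gb_le1: "0 \<le> (y::real) \<Longrightarrow> y \<le> 1 \<Longrightarrow> \<bar>y gchoose b\<bar> \<le> 1"
proof (induction b)
  case 0 then show ?case by simp
next
  case (Suc b)
  have "\<bar>y - of_nat b\<bar> \<le> of_nat (Suc b)" using Suc.prems by auto
  hence "\<bar>y - of_nat b\<bar> / of_nat (Suc b) \<le> 1" by simp
  moreover have "\<bar>y gchoose b\<bar> \<le> 1" using Suc by simp
  ultimately show ?case unfolding gb_abs_rec
    by (metis abs_ge_zero divide_nonneg_nonneg mult_le_one of_nat_0_le_iff times_divide_eq_right)
qed

lemma gb_alpha: assumes "0 \<le> (y::real)" "y \<le> 1" "k \<ge> 1" shows "\<bar>y gchoose k\<bar> \<le> 1 / real k"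
  using assms(3)
proof (induction k rule: dec_induct)
  case base then show ?case using assms by simp
next
  case (step k)
  have h1: "\<bar>y - of_nat k\<bar> \<le> of_nat k" using step assms by auto
  have "\<bar>y gchoose Suc k\<bar> = \<bar>y gchoose k\<bar> * \<bar>y - of_nat k\<bar> / of_nat (Suc k)" by (rule gb_abs_rec)
  also have "\<dots> \<le> (1 / real k) * real k / of_nat (Suc k)"
    by (intro divide_right_mono mult_mono step h1) auto
  also have "\<dots> = 1 / real (Suc k)" using step by simp
  finally show ?case .
qed

lemma gb_pow: "0 \<le> (y::real) \<Longrightarrow> y \<le> real N + 1 \<Longrightarrow> \<bar>y gchoose b\<bar> \<le> 2 ^ N"
proof (induction N arbitrary: y b)
  case 0 then show ?case using gb_le1 by simp
next
  case (Suc N)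
  show ?case
  proof (cases "y \<le> 1")
    case True
    then have "\<bar>y gchoose b\<bar> \<le> 1" using gb_le1 Suc by simp
    also have "(1::real) \<le> 2 ^ Suc N" using one_le_power[of "2::real" "Suc N"] by simp
    finally show ?thesis .
  next
    case False
    show ?thesis
    proof (cases b)
      case 0 then show ?thesis using one_le_power[of "2::real" "Suc N"] by simp
    next
      case (Suc c)
      have e: "y gchoose b = ((y - 1) gchoose c) + ((y - 1) gchoose Suc c)"
        using gbinomial_Suc_Suc[of "y - 1" c] Suc by simp
      have "\<bar>(y - 1) gchoose c\<bar> \<le> 2 ^ N" "\<bar>(y - 1) gchoose Suc c\<bar> \<le> 2 ^ N"
        using Suc.IH[of "y - 1"] False Suc.prems by auto
      then show ?thesis unfolding e by simp
    qed
  qed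
qed

lemma gb_mono: "real k \<le> x + 1 \<Longrightarrow> x \<le> z \<Longrightarrow> 0 \<le> (x::real) gchoose k \<and> x gchoose k \<le> z gchoose k"
proof (induction k)
  case 0 then show ?case by simp
next
  case (Suc k)
  have IH: "0 \<le> x gchoose k \<and> x gchoose k \<le> z gchoose k" using Suc by simp
  have p: "0 \<le> x - real k" using Suc.prems by simp
  have "x gchoose Suc k = (x gchoose k) * (x - real k) / real (Suc k)" by (rule gb_rec)
  moreover have "(x gchoose k) * (x - real k) \<le> (z gchoose k) * (z - real k)"
    using IH p Suc.prems by (intro mult_mono) auto
  moreover have "z gchoose Suc k = (z gchoose k) * (z - real k) / real (Suc k)" by (rule gb_rec)
  ultimately show ?case using IH p
    by (simp add: divide_right_mono)
qed

lemma gb_tele_eq: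
  assumes "(0::real) < X" "X \<le> real A"
  shows "X * (\<Sum>a\<in>{A..A+d}. \<bar>X gchoose a\<bar>) + real (A+d+1) * \<bar>X gchoose (A+d+1)\<bar> = real A * \<bar>X gchoose A\<bar>"
proof (induction d)
  case 0
  have "real (A+1) * \<bar>X gchoose (Suc A)\<bar> = \<bar>X gchoose A\<bar> * \<bar>X - real A\<bar>"
    by (simp add: gb_abs_rec)
  then show ?case using assms by (simp add: algebra_simps abs_of_nonpos)
next
  case (Suc d)
  have "real (A+d+2) * \<bar>X gchoose (Suc (A+d+1))\<bar> = \<bar>X gchoose (A+d+1)\<bar> * \<bar>X - real (A+d+1)\<bar>"
    by (simp add: gb_abs_rec)
  moreover have "\<bar>X - real (A+d+1)\<bar> = real (A+d+1) - X" using assms by simp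
  moreover have "{A..A + Suc d} = insert (A+d+1) {A..A+d}" by auto
  ultimately show ?case using Suc by (simp add: algebra_simps)
qed

lemma gb_tele:
  assumes "(0::real) < X" "X \<le> real A"
  shows "X * (\<Sum>a\<in>{A..M}. \<bar>X gchoose a\<bar>) \<le> real A * \<bar>X gchoose A\<bar>"
proof (cases "A \<le> M")
  case True
  then obtain d where "M = A + d" using le_Suc_ex by blast
  have "0 \<le> real (A+d+1) * \<bar>X gchoose (A+d+1)\<bar>" by simp
  then show ?thesis unfolding \<open>M = A + d\<close> using gb_tele_eq[OF assms, of d] by linarith
next
  case False then show ?thesis by simp
qed

definition SS :: "real \<Rightarrow> real \<Rightarrow> nat \<Rightarrow> real" where
  "SS x z m = (\<Sum>a\<le>m. \<bar>x gchoose a\<bar> * \<bar>z gchoose (m - a)\<bar>)"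

lemma step_lemma:
  assumes X: "1 \<le> X" and y: "0 \<le> y" "y \<le> real N + 1"
  shows "SS X (y + 1) m \<le> SS (X + 1) y m + 2 ^ N / 2"
proof -
  define u where "u a = X gchoose a" for a
  define v where "v a = (if a = 0 then 0 else X gchoose (a - 1))" for a
  define w where "w a = \<bar>y gchoose (m - a)\<bar>" for a
  have uv: "(X + 1) gchoose a = u a + v a" for a
  proof (cases a)
    case 0 then show ?thesis by (simp add: u_def v_def)
  next
    case (Suc b) then show ?thesis
      using gbinomial_Suc_Suc[of X b] by (simp add: u_def v_def)
  qed
  have pt: "\<bar>(y + 1) gchoose (m - a)\<bar> \<le> w a + (if a < m then \<bar>y gchoose (m - a - 1)\<bar> else 0)"
    if "a \<le> m" for a
  proof (cases "a < m")
    case True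
    then have e: "m - a = Suc (m - a - 1)" by simp
    have "(y + 1) gchoose (m - a) = (y gchoose (m - a - 1)) + (y gchoose (m - a))"
      by (subst e, subst gbinomial_Suc_Suc, subst e[symmetric], rule refl)
    then show ?thesis using True abs_triangle_ineq[of "y gchoose (m - a - 1)" "y gchoose (m - a)"]
      by (simp add: w_def)
  next
    case False then show ?thesis using that by (simp add: w_def)
  qed
  have shift: "(\<Sum>a\<le>m. \<bar>u a\<bar> * (if a < m then \<bar>y gchoose (m - a - 1)\<bar> else 0))
      = (\<Sum>a\<le>m. \<bar>v a\<bar> * w a)"
  proof (cases m)
    case 0 then show ?thesis by (simp add: v_def)
  next
    case (Suc m')
    have L: "(\<Sum>a\<le>m. \<bar>u a\<bar> * (if a < m then \<bar>y gchoose (m - a - 1)\<bar> else 0))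
       = (\<Sum>a\<le>m'. \<bar>X gchoose a\<bar> * \<bar>y gchoose (m' - a)\<bar>)"
      unfolding Suc by (simp add: u_def)
    have R: "(\<Sum>a\<le>m. \<bar>v a\<bar> * w a) = (\<Sum>a\<le>m'. \<bar>X gchoose a\<bar> * \<bar>y gchoose (m' - a)\<bar>)"
      unfolding w_def Suc by (simp add: sum.atMost_Suc_shift v_def del: sum.atMost_Suc)
    show ?thesis using L R by simp
  qed
  have A1: "SS X (y + 1) m \<le> (\<Sum>a\<le>m. (\<bar>u a\<bar> + \<bar>v a\<bar>) * w a)"
  proof -
    have "SS X (y + 1) m \<le> (\<Sum>a\<le>m. \<bar>u a\<bar> * (w a + (if a < m then \<bar>y gchoose (m - a - 1)\<bar> else 0)))"
      unfolding SS_def u_def by (intro sum_mono mult_left_mono pt) auto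
    also have "\<dots> = (\<Sum>a\<le>m. \<bar>u a\<bar> * w a) + (\<Sum>a\<le>m. \<bar>u a\<bar> * (if a < m then \<bar>y gchoose (m - a - 1)\<bar> else 0))"
      by (simp add: distrib_left sum.distrib)
    also have "\<dots> = (\<Sum>a\<le>m. (\<bar>u a\<bar> + \<bar>v a\<bar>) * w a)"
      unfolding shift by (simp add: distrib_right sum.distrib)
    finally show ?thesis .
  qed
  have A2: "SS (X + 1) y m = (\<Sum>a\<le>m. \<bar>u a + v a\<bar> * w a)"
    unfolding SS_def uv w_def by simp
  define j where "j = nat (\<lfloor>X\<rfloor> + 1)"
  have fl0: "0 \<le> \<lfloor>X\<rfloor> + 1" using X by linarith
  have fl: "real j = of_int \<lfloor>X\<rfloor> + 1" unfolding j_def using fl0 by simp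
  have jX: "X < real j" "real j \<le> X + 1"
    unfolding fl using of_int_floor_le[of X] real_of_int_floor_add_one_gt[of X] by linarith+
  have A3: "0 \<le> u a \<and> 0 \<le> v a" if "a \<le> j" for a
  proof -
    have "real a \<le> X + 1" using that jX by (meson of_nat_le_iff order_trans)
    then have "0 \<le> u a" using gb_mono[of a X X] by (simp add: u_def)
    moreover have "0 \<le> v a"
    proof (cases a)
      case 0 then show ?thesis by (simp add: v_def)
    next
      case (Suc b)
      have "real b \<le> X + 1" using \<open>real a \<le> X + 1\<close> Suc by simp
      then show ?thesis using gb_mono[of b X X] Suc by (simp add: v_def)
    qed
    ultimately show ?thesis by simp
  qed
  have wb: "0 \<le> w a \<and> w a \<le> 2 ^ N" for a
    using gb_pow[OF y] by (simp add: w_def)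
  have A4: "(\<bar>u a\<bar> + \<bar>v a\<bar>) * w a - \<bar>u a + v a\<bar> * w a \<le> (if j < a then 2 ^ (N + 1) * \<bar>u a\<bar> else 0)" for a
  proof (cases "j < a")
    case True
    have d1: "0 \<le> \<bar>u a\<bar> + \<bar>v a\<bar> - \<bar>u a + v a\<bar>" by simp
    have d2: "\<bar>u a\<bar> + \<bar>v a\<bar> - \<bar>u a + v a\<bar> \<le> 2 * \<bar>u a\<bar>" by simp
    have "(\<bar>u a\<bar> + \<bar>v a\<bar> - \<bar>u a + v a\<bar>) * w a \<le> (2 * \<bar>u a\<bar>) * 2 ^ N"
      using d1 d2 wb[of a] by (intro mult_mono) auto
    then show ?thesis using True by (simp add: algebra_simps)
  next
    case False
    then have "0 \<le> u a" "0 \<le> v a" using A3 by auto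
    then show ?thesis using False by simp
  qed
  have A5: "(\<Sum>a\<le>m. (if j < a then 2 ^ (N + 1) * \<bar>u a\<bar> else 0)) = 2 ^ (N + 1) * (\<Sum>a\<in>{Suc j..m}. \<bar>u a\<bar>)"
  proof -
    have "{..m} \<inter> {a. j < a} = {Suc j..m}" by auto
    then have "(\<Sum>a\<in>{Suc j..m}. 2 ^ (N + 1) * \<bar>u a\<bar>) = (\<Sum>a\<le>m. (if a \<in> {a. j < a} then 2 ^ (N + 1) * \<bar>u a\<bar> else 0))"
      using sum.inter_restrict[of "{..m}" "\<lambda>a. 2 ^ (N + 1) * \<bar>u a\<bar>" "{a. j < a}"] by simp
    then show ?thesis by (simp add: sum_distrib_left)
  qed
  have Xpos: "0 < X" using X by simp
  have T1: "X * (\<Sum>a\<in>{Suc j..m}. \<bar>u a\<bar>) \<le> real (Suc j) * \<bar>u (Suc j)\<bar>"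
    unfolding u_def using gb_tele[OF Xpos, of "Suc j" m] jX by simp
  have T2: "real (Suc j) * \<bar>u (Suc j)\<bar> = \<bar>u j\<bar> * (real j - X)"
    unfolding u_def gb_abs_rec using jX by simp
  obtain i where ji: "j = Suc i" using jX X by (cases j) auto
  have ui: "0 \<le> u j \<and> u j \<le> X - real i"
  proof -
    have m: "0 \<le> X gchoose i \<and> X gchoose i \<le> real (Suc i) gchoose i"
      using gb_mono[of i X "real (Suc i)"] jX ji by simp
    have "real (Suc i) gchoose i = real (Suc i)"
      using binomial_gbinomial[of "Suc i" i, where 'a=real] by (simp add: binomial_Suc_n)
    then have m2: "X gchoose i \<le> real (Suc i)" using m by simp
    have xi: "0 \<le> X - real i" "X - real i \<le> 1" using jX ji by auto
    have eq: "u j = (X gchoose i) * (X - real i) / real (Suc i)" unfolding u_def ji by (rule gb_rec)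
    have Pb: "(X gchoose i) * (X - real i) \<le> (X - real i) * real (Suc i)"
      using m2 xi by (subst mult.commute, intro mult_right_mono) auto
    have P0: "0 \<le> (X gchoose i) * (X - real i)" using m xi by simp
    have "u j \<le> X - real i" unfolding eq using Pb by (subst pos_divide_le_eq) auto
    moreover have "0 \<le> u j" unfolding eq using P0 by simp
    ultimately show ?thesis by simp
  qed
  have T3: "\<bar>u j\<bar> * (real j - X) \<le> 1 / 4"
  proof -
    have "\<bar>u j\<bar> * (real j - X) \<le> (X - real i) * (real j - X)"
      using ui jX by (intro mult_right_mono) auto
    also have "\<dots> \<le> 1 / 4"
    proof -
      have sq: "0 \<le> (2 * X - 2 * real i - 1) * (2 * X - 2 * real i - 1)" by simp
      have "(X - real i) * (real j - X) = (1 - (2 * X - 2 * real i - 1) * (2 * X - 2 * real i - 1)) / 4"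
        using ji by (simp add: algebra_simps)
      then show ?thesis using sq by simp
    qed
    finally show ?thesis .
  qed
  have T4: "(\<Sum>a\<in>{Suc j..m}. \<bar>u a\<bar>) \<le> 1 / 4"
  proof -
    have "X * (\<Sum>a\<in>{Suc j..m}. \<bar>u a\<bar>) \<le> 1 / 4" using T1 T2 T3 by linarith
    moreover have "(\<Sum>a\<in>{Suc j..m}. \<bar>u a\<bar>) \<le> X * (\<Sum>a\<in>{Suc j..m}. \<bar>u a\<bar>)"
      using X mult_right_mono[OF X, of "\<Sum>a\<in>{Suc j..m}. \<bar>u a\<bar>"] by (simp add: sum_nonneg)
    ultimately show ?thesis by linarith
  qed
  have "SS X (y + 1) m - SS (X + 1) y m \<le> (\<Sum>a\<le>m. (\<bar>u a\<bar> + \<bar>v a\<bar>) * w a - \<bar>u a + v a\<bar> * w a)"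
    using A1 A2 by (simp add: sum_subtractf)
  also have "\<dots> \<le> (\<Sum>a\<le>m. (if j < a then 2 ^ (N + 1) * \<bar>u a\<bar> else 0))"
    by (rule sum_mono) (rule A4)
  also have "\<dots> \<le> 2 ^ (N + 1) * (1 / 4)"
    unfolding A5 using T4 by (intro mult_left_mono) auto
  finally show ?thesis by simp
qed

lemma iter_lemma:
  assumes "1 \<le> X" "0 \<le> al" "al \<le> 1"
  shows "SS X (real d + al) m \<le> SS (X + real d) al m + 2 ^ d"
  using assms(1)
proof (induction d arbitrary: X)
  case 0 then show ?case by simp
next
  case (Suc d)
  have "SS X (real (Suc d) + al) m = SS X ((real d + al) + 1) m" by (simp add: algebra_simps)
  also have "\<dots> \<le> SS (X + 1) (real d + al) m + 2 ^ d / 2"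
    using step_lemma[of X "real d + al" d m] Suc.prems assms by simp
  also have "\<dots> \<le> SS (X + 1 + real d) al m + 2 ^ d + 2 ^ d / 2"
    using Suc.IH[of "X + 1"] Suc.prems by simp
  also have "\<dots> \<le> SS (X + real (Suc d)) al m + 2 ^ Suc d"
    by (simp add: algebra_simps)
  finally show ?case .
qed

lemma lfac_eq: "0 < n \<Longrightarrow> lfac n k (x / real n) = x gchoose k"
  by (simp add: lfac_def gbinomial_prod_rev atLeast0LessThan)

lemma leb_eq:
  assumes "0 < n"
  shows "leb n (x / real n) (y / real n) (z / real n) = (\<Sum>i2\<le>n. \<bar>y gchoose i2\<bar> * SS x z (n - i2))"
proof -
  define h where "h p = (case p of (i2, a) \<Rightarrow> (a, i2, n - i2 - a))" for p :: "nat \<times> nat"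
  have img: "idx n = h ` (SIGMA i2:{..n}. {..n - i2})"
  proof
    show "idx n \<subseteq> h ` (SIGMA i2:{..n}. {..n - i2})"
    proof
      fix i assume "i \<in> idx n"
      then obtain i1 i2 i3 where i: "i = (i1, i2, i3)" "i1 + i2 + i3 = n" unfolding idx_def by auto
      then have "i = h (i2, i1)" "(i2, i1) \<in> (SIGMA i2:{..n}. {..n - i2})" by (auto simp: h_def)
      then show "i \<in> h ` (SIGMA i2:{..n}. {..n - i2})" by blast
    qed
  next
    show "h ` (SIGMA i2:{..n}. {..n - i2}) \<subseteq> idx n" by (auto simp: h_def idx_def)
  qed
  have inj: "inj_on h (SIGMA i2:{..n}. {..n - i2})"
    by (auto simp: inj_on_def h_def)
  have "leb n (x / real n) (y / real n) (z / real n) = (\<Sum>p\<in>(SIGMA i2:{..n}. {..n - i2}). \<bar>lagr n (h p) (x / real n) (y / real n) (z / real n)\<bar>)"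
    unfolding leb_def img by (simp add: sum.reindex[OF inj])
  also have "\<dots> = (\<Sum>i2\<le>n. \<Sum>a\<le>n - i2. \<bar>lagr n (h (i2, a)) (x / real n) (y / real n) (z / real n)\<bar>)"
    by (subst sum.Sigma) (auto simp: split_beta)
  also have "\<dots> = (\<Sum>i2\<le>n. \<bar>y gchoose i2\<bar> * SS x z (n - i2))"
    unfolding SS_def sum_distrib_left
    by (intro sum.cong refl) (simp add: h_def lagr_def lfac_eq[OF assms] abs_mult algebra_simps)
  finally show ?thesis .
qed

lemma harm_le_ln: "1 \<le> n \<Longrightarrow> (harm n :: real) \<le> ln (real n) + 1"
proof -
  assume "1 \<le> n"
  then obtain k where k: "n = Suc k" by (cases n) auto
  have "harm (Suc k) - ln (real (Suc k)) \<le> harm (Suc 0) - ln (real (Suc 0))"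
    using decseqD[OF decseq_harm_diff_ln, of 0 k] by simp
  then show ?thesis using k by (simp add: harm_def)
qed

lemma G0:
  assumes "0 \<le> al" "al \<le> 1" "1 \<le> n"
  shows "(\<Sum>i\<le>n. \<bar>al gchoose i\<bar>) \<le> 2 + ln (real n)"
proof -
  have s: "{..n} = insert 0 {1..n}" by auto
  have "(\<Sum>i\<in>{1..n}. \<bar>al gchoose i\<bar>) \<le> (\<Sum>i\<in>{1..n}. inverse (real i))"
    using gb_alpha[OF assms(1,2)] by (intro sum_mono) (auto simp: divide_inverse)
  also have "\<dots> = harm n" by (simp add: harm_def)
  also have "\<dots> \<le> ln (real n) + 1" using harm_le_ln assms by simp
  finally show ?thesis unfolding s by simp
qed

lemma G1:
  assumes "1 \<le> r" "0 \<le> al" "al \<le> 1" "r \<le> n"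
  shows "(\<Sum>i\<le>n. \<bar>(real r + al) gchoose i\<bar>) \<le> 2 ^ (r + 2)"
proof -
  define x where "x = real r + al"
  have s: "{..n} = {..r} \<union> {Suc r..n}" using assms by auto
  have sp: "(\<Sum>i\<le>n. \<bar>x gchoose i\<bar>) = (\<Sum>i\<le>r. \<bar>x gchoose i\<bar>) + (\<Sum>i\<in>{Suc r..n}. \<bar>x gchoose i\<bar>)"
    unfolding s by (rule sum.union_disjoint) auto
  have hd: "(\<Sum>i\<le>r. \<bar>x gchoose i\<bar>) \<le> 2 ^ (r + 1)"
  proof -
    have "(\<Sum>i\<le>r. \<bar>x gchoose i\<bar>) \<le> (\<Sum>i\<le>r. real (Suc r choose i))"
    proof (intro sum_mono)
      fix i assume "i \<in> {..r}"
      then have "real i \<le> x + 1" "x \<le> real (Suc r)" using assms by (auto simp: x_def)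
      then have "0 \<le> x gchoose i \<and> x gchoose i \<le> real (Suc r) gchoose i" by (rule gb_mono)
      then show "\<bar>x gchoose i\<bar> \<le> real (Suc r choose i)"
        using binomial_gbinomial[of "Suc r" i, where 'a=real] by simp
    qed
    also have "\<dots> \<le> (\<Sum>i\<le>Suc r. real (Suc r choose i))" by (simp add: sum.atMost_Suc)
    also have "\<dots> = real (\<Sum>i\<le>Suc r. Suc r choose i)" by simp
    also have "\<dots> = 2 ^ (r + 1)" unfolding choose_row_sum by simp
    finally show ?thesis .
  qed
  have tl: "(\<Sum>i\<in>{Suc r..n}. \<bar>x gchoose i\<bar>) \<le> 2"
  proof -
    have xp: "0 < x" "x \<le> real (Suc r)" "real r \<le> x" using assms by (auto simp: x_def)
    have t: "x * (\<Sum>i\<in>{Suc r..n}. \<bar>x gchoose i\<bar>) \<le> real (Suc r) * \<bar>x gchoose Suc r\<bar>"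
      using gb_tele[of x "Suc r" n] xp by simp
    have "0 \<le> x gchoose Suc r \<and> x gchoose Suc r \<le> real (Suc r) gchoose Suc r"
      using xp by (intro gb_mono) auto
    then have "\<bar>x gchoose Suc r\<bar> \<le> 1"
      using binomial_gbinomial[of "Suc r" "Suc r", where 'a=real] by simp
    then have "x * (\<Sum>i\<in>{Suc r..n}. \<bar>x gchoose i\<bar>) \<le> real (Suc r)"
    proof -
      have "real (Suc r) * \<bar>x gchoose Suc r\<bar> \<le> real (Suc r) * 1"
        by (rule mult_left_mono) (use \<open>\<bar>x gchoose Suc r\<bar> \<le> 1\<close> in auto)
      then show ?thesis using t by (metis mult.right_neutral order_trans)
    qed
    also have "\<dots> \<le> x * 2" using xp assms by simp
    finally show ?thesis using xp by simp
  qed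
  have p: "(2::real) \<le> 2 ^ (r + 1)" using one_le_power[of "2::real" r] by simp
  have "(\<Sum>i\<le>n. \<bar>x gchoose i\<bar>) \<le> 2 ^ (r + 1) + 2 ^ (r + 1)" using sp hd tl p by linarith
  also have "\<dots> = 2 ^ (r + 2)" by simp
  finally show ?thesis by (simp add: x_def)
qed

theorem lemma15:
  fixes n r1 r2 r3 :: nat and a1 a2 a3 :: real
  assumes "n \<ge> 4"
    and "r1 + r2 + r3 = n - 1"
    and "-1 < a1" and "a1 < 1"
    and "0 \<le> a2" and "a2 < 1"
    and "0 \<le> a3" and "a3 < 1"
    and "a1 + a2 + a3 = 1"
    and "real r1 + a1 \<ge> real r2 + a2"
    and "real r1 + a1 \<ge> real r3 + a3"
  shows "frakL n r1 r2 r3 a1 a2 a3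
    \<le> frakL n (r1 + r3) r2 0 a1 a2 a3 + 2 ^ (r2 + r3 + 2) + 2 ^ r2 - real r3
       + (if r2 \<ge> 1 then 2 ^ r3 else 2 ^ (r3 + 1) * ln (real n))"
proof -
  have n0: "0 < n" using assms(1) by simp
  define x1 where "x1 = real r1 + a1"
  define x2 where "x2 = real r2 + a2"
  define x3 where "x3 = real r3 + a3"
  have L: "frakL n r1 r2 r3 a1 a2 a3 = (\<Sum>i2\<le>n. \<bar>x2 gchoose i2\<bar> * SS x1 x3 (n - i2))"
    unfolding frakL_def x1_def x2_def x3_def by (rule leb_eq[OF n0])
  have R: "frakL n (r1 + r3) r2 0 a1 a2 a3 = (\<Sum>i2\<le>n. \<bar>x2 gchoose i2\<bar> * SS (x1 + real r3) a3 (n - i2))"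
    unfolding frakL_def using leb_eq[OF n0, of "real (r1 + r3) + a1" x2 "real 0 + a3"]
    by (simp add: x1_def x2_def algebra_simps)
  define G where "G = (\<Sum>i2\<le>n. \<bar>x2 gchoose i2\<bar>)"
  have G0': "0 \<le> G" unfolding G_def by (simp add: sum_nonneg)
  have ln0: "0 \<le> ln (real n)" using n0 by simp
  have core: "frakL n r1 r2 r3 a1 a2 a3 \<le> frakL n (r1 + r3) r2 0 a1 a2 a3 + 2 ^ r3 * G"
  proof (cases "r3 = 0")
    case True
    then have "frakL n r1 r2 r3 a1 a2 a3 = frakL n (r1 + r3) r2 0 a1 a2 a3"
      using L R by (simp add: x3_def)
    then show ?thesis using G0' by simp
  next
    case False
    then have "real r3 \<ge> 1" by simp
    then have X1: "1 \<le> x1" using assms(11) assms(7) by (simp add: x1_def)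
    have it: "SS x1 x3 m \<le> SS (x1 + real r3) a3 m + 2 ^ r3" for m
      using iter_lemma[OF X1 assms(7), of r3 m] assms(8) by (simp add: x3_def)
    have "frakL n r1 r2 r3 a1 a2 a3 \<le> (\<Sum>i2\<le>n. \<bar>x2 gchoose i2\<bar> * (SS (x1 + real r3) a3 (n - i2) + 2 ^ r3))"
      unfolding L by (intro sum_mono mult_left_mono it) auto
    also have "\<dots> = frakL n (r1 + r3) r2 0 a1 a2 a3 + 2 ^ r3 * G"
      unfolding R G_def by (simp add: distrib_left sum.distrib sum_distrib_left algebra_simps)
    finally show ?thesis .
  qed
  have r3e: "real r3 \<le> 2 ^ r3"
  proof -
    have "r3 < 2 ^ r3" by simp
    then have "real r3 < real (2 ^ r3)" by (simp only: of_nat_less_iff)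
    then show ?thesis by simp
  qed
  show ?thesis
  proof (cases "r2 \<ge> 1")
    case True
    have "r2 \<le> n" using assms(2) by simp
    then have "G \<le> 2 ^ (r2 + 2)" unfolding G_def x2_def
      using G1[OF True assms(5)] assms(6) by simp
    then have "2 ^ r3 * G \<le> 2 ^ r3 * 2 ^ (r2 + 2)" by (intro mult_left_mono) auto
    also have "(2::real) ^ r3 * 2 ^ (r2 + 2) = 2 ^ (r2 + r3 + 2)" by (simp add: power_add[symmetric])
    finally have g: "2 ^ r3 * G \<le> 2 ^ (r2 + r3 + 2)" .
    have p: "(0::real) \<le> 2 ^ r2" by simp
    have e: "(if r2 \<ge> 1 then 2 ^ r3 else 2 ^ (r3 + 1) * ln (real n)) = (2::real) ^ r3" using True by simp
    show ?thesis unfolding e using core r3e g p by linarith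
  next
    case False
    then have r20: "r2 = 0" by simp
    have "G \<le> 2 + ln (real n)" unfolding G_def x2_def r20
      using G0[of a2 n] assms(5,6) n0 by simp
    then have g1: "2 ^ r3 * G \<le> 2 ^ r3 * (2 + ln (real n))" by (intro mult_left_mono) auto
    have g2: "(2::real) ^ r3 * ln (real n) \<le> 2 ^ (r3 + 1) * ln (real n)"
      using ln0 by (intro mult_right_mono) auto
    have e: "(if r2 \<ge> 1 then 2 ^ r3 else 2 ^ (r3 + 1) * ln (real n)) = (2::real) ^ (r3 + 1) * ln (real n)" using r20 by simp
    have p: "(2::real) ^ (r2 + r3 + 2) = 4 * 2 ^ r3" "(2::real) ^ r2 = 1" using r20 by simp_all
    have g3: "2 ^ r3 * (2 + ln (real n)) = 2 * 2 ^ r3 + (2::real) ^ r3 * ln (real n)" by (simp add: algebra_simps)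
    show ?thesis unfolding e p using core r3e g1 g2 g3 by linarith
  qed
qed

end
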